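(* Let $\mathcal{C}$ be a regular category, $A, B$ objects, and $R_a$ a subobject of $A \times B$, $R_b$ a subobject of $B \times A$. Suppose that for every subobject $p$ of $A$ there is an arrow $c : \mathbf{1} \to A$ such that the following regular sequents are valid in $\mathcal{C}$ (with $x$ of sort $A$, $y$ of sort $B$): (A1) $R_a(c,y) \wedge R_b(y,x) \vdash_{\{x,y\}} p(x)$, (A2) $R_a(c,y) \wedge p(x) \vdash_{\{x,y\}} R_b(y,x)$, (A3) $\vdash \exists y.\, R_a(c,y)$. Then every natural transformation $\tau : \mathsf{Sub} \Rightarrow \mathsf{Sub}$ has a fixpoint, i.e. there is $s \in \mathsf{Sub}(\mathbf{1})$ with $\tau_{\mathbf{1}}(s) = s$.
   Context: A regular category is a well-powered category with finite limits and images stable under pullback, with terminal object $\mathbf{1}$. $\mathsf{Sub}(A)$ is the poset of subobjects of $A$; for $f : A \to B$, $f^*:\mathsf{Sub}(B)\to\mathsf{Sub}(A)$ is pullback, giving a functor $\mathsf{Sub}:\mathcal{C}^{op}\to\mathbf{Set}$; a natural transformation $\tau:\mathsf{Sub}\Rightarrow\mathsf{Sub}$ is a family $\tau_A:\mathsf{Sub}(A)\to\mathsf{Sub}(A)$ with $f^*\circ\tau_B=\tau_A\circ f^*$. Regular formulas are interpreted as subobjects: relation symbols by the given subobjects, substitution by pullback, conjunction by meet, $\exists$ along a projection $\pi$ by the left adjoint of $\pi^*$. A sequent $\phi\vdash_X\psi$ is valid if $[\![\phi]\!]\le[\![\psi]\!]$ in the subobject poset of the product of the sorts of $X$; $\vdash_X\psi$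 means $\top\vdash_X\psi$. *)

theory Defs
  imports Main
begin

text \<open>Small categories presented by objects, arrows, domain, codomain,
composition (cmp C g f = g after f) and identities.\<close>

record ('o, 'a) cat =
  Ob  :: "'o set"
  Ar  :: "'a set"
  dm  :: "'a \<Rightarrow> 'o"
  cd  :: "'a \<Rightarrow> 'o"
  cmp :: "'a \<Rightarrow> 'a \<Rightarrow> 'a"
  idt :: "'o \<Rightarrow> 'a"

definition hom :: "('o,'a) cat \<Rightarrow> 'o \<Rightarrow> 'o \<Rightarrow> 'a set" where
  "hom C X Y = {f \<in> Ar C. dm C f = X \<and> cd C f = Y}"

definition category :: "('o,'a) cat \<Rightarrow> bool" where
  "category C \<longleftrightarrow>
     (\<forall>f\<in>Ar C. dm C f \<in> Ob C \<and> cd C f \<in> Ob C) \<and>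
     (\<forall>X\<in>Ob C. idt C X \<in> hom C X X) \<and>
     (\<forall>f g. f \<in> Ar C \<and> g \<in> Ar C \<and> cd C f = dm C g \<longrightarrow>
            cmp C g f \<in> hom C (dm C f) (cd C g)) \<and>
     (\<forall>f\<in>Ar C. cmp C f (idt C (dm C f)) = f \<and> cmp C (idt C (cd C f)) f = f) \<and>
     (\<forall>f g h. f \<in> Ar C \<and> g \<in> Ar C \<and> h \<in> Ar C \<and> cd C f = dm C g \<and> cd C g = dm C h \<longrightarrow>
            cmp C h (cmp C g f) = cmp C (cmp C h g) f)"

definition mono :: "('o,'a) cat \<Rightarrow> 'a \<Rightarrow> bool" where
  "mono C m \<longleftrightarrow> m \<in> Ar C \<and>
     (\<forall>g h. g \<in> Ar C \<and> h \<in> Ar C \<and> dm C g = dm C h \<and> cd C g = dm C m \<and> cd C h = dm C m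
            \<and> cmp C m g = cmp C m h \<longrightarrow> g = h)"

text \<open>Subobjects of X are represented by monos with codomain X; two monos
represent the same subobject iff sub_eq holds.\<close>

definition Sub :: "('o,'a) cat \<Rightarrow> 'o \<Rightarrow> 'a set" where
  "Sub C X = {m. mono C m \<and> cd C m = X}"

definition sub_le :: "('o,'a) cat \<Rightarrow> 'a \<Rightarrow> 'a \<Rightarrow> bool" where
  "sub_le C m n \<longleftrightarrow> (\<exists>k \<in> hom C (dm C m) (dm C n). m = cmp C n k)"

definition sub_eq :: "('o,'a) cat \<Rightarrow> 'a \<Rightarrow> 'a \<Rightarrow> bool" where
  "sub_eq C m n \<longleftrightarrow> sub_le C m n \<and> sub_le C n m"

definition terminal :: "('o,'a) cat \<Rightarrow> 'o \<Rightarrow> bool" where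
  "terminal C T \<longleftrightarrow> T \<in> Ob C \<and> (\<forall>X\<in>Ob C. \<exists>!f. f \<in> hom C X T)"

definition is_pullback :: "('o,'a) cat \<Rightarrow> 'a \<Rightarrow> 'a \<Rightarrow> 'a \<Rightarrow> 'a \<Rightarrow> bool" where
  "is_pullback C f g p q \<longleftrightarrow>
     f \<in> Ar C \<and> g \<in> Ar C \<and> cd C f = cd C g \<and>
     p \<in> Ar C \<and> q \<in> Ar C \<and> dm C p = dm C q \<and> cd C p = dm C f \<and> cd C q = dm C g \<and>
     cmp C f p = cmp C g q \<and>
     (\<forall>p' q'. p' \<in> Ar C \<and> q' \<in> Ar C \<and> dm C p' = dm C q' \<and> cd C p' = dm C f \<and>
              cd C q' = dm C g \<and> cmp C f p' = cmp C g q' \<longrightarrow>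
        (\<exists>!h. h \<in> hom C (dm C p') (dm C p) \<and> cmp C p h = p' \<and> cmp C q h = q'))"

definition is_product :: "('o,'a) cat \<Rightarrow> 'o \<Rightarrow> 'o \<Rightarrow> 'o \<Rightarrow> 'a \<Rightarrow> 'a \<Rightarrow> bool" where
  "is_product C X Y P p1 p2 \<longleftrightarrow>
     P \<in> Ob C \<and> p1 \<in> hom C P X \<and> p2 \<in> hom C P Y \<and>
     (\<forall>Z f g. f \<in> hom C Z X \<and> g \<in> hom C Z Y \<longrightarrow>
        (\<exists>!h. h \<in> hom C Z P \<and> cmp C p1 h = f \<and> cmp C p2 h = g))"

definition is_pair :: "('o,'a) cat \<Rightarrow> 'a \<Rightarrow> 'a \<Rightarrow> 'a \<Rightarrow> 'a \<Rightarrow> 'a \<Rightarrow> bool" where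
  "is_pair C p1 p2 f g h \<longleftrightarrow>
     h \<in> Ar C \<and> dm C h = dm C f \<and> cd C h = dm C p1 \<and> cmp C p1 h = f \<and> cmp C p2 h = g"

definition is_image :: "('o,'a) cat \<Rightarrow> 'a \<Rightarrow> 'a \<Rightarrow> bool" where
  "is_image C f m \<longleftrightarrow>
     f \<in> Ar C \<and> mono C m \<and> cd C m = cd C f \<and>
     (\<exists>e \<in> hom C (dm C f) (dm C m). f = cmp C m e) \<and>
     (\<forall>n. mono C n \<and> cd C n = cd C f \<and> (\<exists>e \<in> hom C (dm C f) (dm C n). f = cmp C n e)
          \<longrightarrow> sub_le C m n)"

text \<open>Regular category: finite limits (terminal object and pullbacks),
images, stable under pullback. Well-poweredness is automatic in HOL
(subobject representatives form a set of arrows).\<close>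

definition regular_category :: "('o,'a) cat \<Rightarrow> bool" where
  "regular_category C \<longleftrightarrow>
     category C \<and> (\<exists>T. terminal C T) \<and>
     (\<forall>f g. f \<in> Ar C \<and> g \<in> Ar C \<and> cd C f = cd C g \<longrightarrow> (\<exists>p q. is_pullback C f g p q)) \<and>
     (\<forall>f \<in> Ar C. \<exists>m. is_image C f m) \<and>
     (\<forall>f m g f' g0 m' g1. is_image C f m \<and> is_pullback C g f f' g0 \<and> is_pullback C g m m' g1
          \<longrightarrow> is_image C f' m')"

definition pb :: "('o,'a) cat \<Rightarrow> 'a \<Rightarrow> 'a \<Rightarrow> 'a \<Rightarrow> bool" where
  "pb C f m n \<longleftrightarrow> (\<exists>q. is_pullback C f m n q)"

definition sub_meet :: "('o,'a) cat \<Rightarrow> 'a \<Rightarrow> 'a \<Rightarrow> 'a \<Rightarrow> bool" where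
  "sub_meet C m n k \<longleftrightarrow> (\<exists>p q. is_pullback C m n p q \<and> k = cmp C m p)"

text \<open>A natural transformation Sub => Sub, given on representatives:
maps Sub X to Sub X, respects equality of subobjects, and commutes with
pullback up to equality of subobjects.\<close>

definition nat_trans_Sub :: "('o,'a) cat \<Rightarrow> ('o \<Rightarrow> 'a \<Rightarrow> 'a) \<Rightarrow> bool" where
  "nat_trans_Sub C \<tau> \<longleftrightarrow>
     (\<forall>X\<in>Ob C. \<forall>m\<in>Sub C X. \<tau> X m \<in> Sub C X) \<and>
     (\<forall>X\<in>Ob C. \<forall>m n. m \<in> Sub C X \<and> n \<in> Sub C X \<and> sub_eq C m n \<longrightarrow> sub_eq C (\<tau> X m) (\<tau> X n)) \<and>
     (\<forall>X Y f m n n'. f \<in> hom C X Y \<and> m \<in> Sub C Y \<and> pb C f m n \<and> pb C f (\<tau> Y m) n'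
          \<longrightarrow> sub_eq C (\<tau> X n) n')"

end

theory Submission
  imports Defs
begin

definition fac :: "('o,'a) cat \<Rightarrow> 'a \<Rightarrow> 'a \<Rightarrow> bool" where
  "fac C g m \<longleftrightarrow> (\<exists>h. h \<in> Ar C \<and> dm C h = dm C g \<and> cd C h = dm C m \<and> g = cmp C m h)"

lemma hom_iff: "f \<in> hom C X Y \<longleftrightarrow> f \<in> Ar C \<and> dm C f = X \<and> cd C f = Y"
  by (simp add: hom_def)

lemma sub_le_fac: "sub_le C m n \<longleftrightarrow> fac C m n"
  by (auto simp: sub_le_def fac_def hom_iff)

locale rcat = fixes C :: "('o,'a) cat" assumes cat: "category C"
begin

lemma ar_ob: "f \<in> Ar C \<Longrightarrow> dm C f \<in> Ob C \<and> cd C f \<in> Ob C"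
  using cat unfolding category_def by blast

lemma id_ar: "X \<in> Ob C \<Longrightarrow> idt C X \<in> Ar C \<and> dm C (idt C X) = X \<and> cd C (idt C X) = X"
  using cat unfolding category_def hom_iff by blast

lemma comp_ar: "f \<in> Ar C \<Longrightarrow> g \<in> Ar C \<Longrightarrow> cd C f = dm C g \<Longrightarrow>
   cmp C g f \<in> Ar C \<and> dm C (cmp C g f) = dm C f \<and> cd C (cmp C g f) = cd C g"
  using cat unfolding category_def hom_iff by blast

lemma assoc: "f \<in> Ar C \<Longrightarrow> g \<in> Ar C \<Longrightarrow> h \<in> Ar C \<Longrightarrow> cd C f = dm C g \<Longrightarrow> cd C g = dm C h \<Longrightarrow>
   cmp C (cmp C h g) f = cmp C h (cmp C g f)"
  using cat unfolding category_def by metis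

lemma idl: "f \<in> Ar C \<Longrightarrow> cmp C (idt C (cd C f)) f = f"
  using cat unfolding category_def by blast
lemma idr: "f \<in> Ar C \<Longrightarrow> cmp C f (idt C (dm C f)) = f"
  using cat unfolding category_def by blast

lemma pbF: assumes "is_pullback C f m n q"
  shows "f \<in> Ar C" "m \<in> Ar C" "n \<in> Ar C" "q \<in> Ar C" "cd C f = cd C m" "dm C n = dm C q"
    "cd C n = dm C f" "cd C q = dm C m" "cmp C f n = cmp C m q"
  using assms unfolding is_pullback_def by auto

lemma pb_univ: assumes P: "is_pullback C f g p q" and "p' \<in> Ar C" "q' \<in> Ar C" "dm C p' = dm C q'"
  "cd C p' = dm C f" "cd C q' = dm C g" "cmp C f p' = cmp C g q'"
  shows "\<exists>h. h \<in> Ar C \<and> dm C h = dm C p' \<and> cd C h = dm C p \<and> cmp C p h = p' \<and> cmp C q h = q'"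
proof -
  have "\<exists>!h. h \<in> hom C (dm C p') (dm C p) \<and> cmp C p h = p' \<and> cmp C q h = q'"
    using P assms(2-) unfolding is_pullback_def by blast
  then show ?thesis unfolding hom_iff by blast
qed

lemma pb_uniq: assumes P: "is_pullback C f g p q" and "p' \<in> Ar C" "q' \<in> Ar C" "dm C p' = dm C q'"
  "cd C p' = dm C f" "cd C q' = dm C g" "cmp C f p' = cmp C g q'"
  and "h1 \<in> hom C (dm C p') (dm C p)" "cmp C p h1 = p'" "cmp C q h1 = q'"
  and "h2 \<in> hom C (dm C p') (dm C p)" "cmp C p h2 = p'" "cmp C q h2 = q'"
  shows "h1 = h2"
proof -
  have "\<exists>!h. h \<in> hom C (dm C p') (dm C p) \<and> cmp C p h = p' \<and> cmp C q h = q'"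
    using P assms(2-7) unfolding is_pullback_def by blast
  then show ?thesis using assms(8-) by blast
qed

lemma facI: "h \<in> Ar C \<Longrightarrow> dm C h = dm C g \<Longrightarrow> cd C h = dm C m \<Longrightarrow> cmp C m h = g \<Longrightarrow> fac C g m"
  unfolding fac_def by auto

lemma facE: assumes "fac C g m"
  obtains h where "h \<in> Ar C" "dm C h = dm C g" "cd C h = dm C m" "cmp C m h = g"
  using assms unfolding fac_def by auto

lemma pb_fac: assumes P: "is_pullback C f m n q" and g: "g \<in> Ar C" "cd C g = dm C f"
  and F: "fac C (cmp C f g) m" shows "fac C g n"
proof -
  note X = pbF[OF P]
  obtain h where h: "h \<in> Ar C" "dm C h = dm C (cmp C f g)" "cd C h = dm C m" "cmp C m h = cmp C f g"
    using F by (rule facE)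
  have dh: "dm C h = dm C g" using h(2) comp_ar[OF g(1) X(1) g(2)] by simp
  obtain k where "k \<in> Ar C" "dm C k = dm C g" "cd C k = dm C n" "cmp C n k = g"
    using pb_univ[OF P g(1) h(1) dh[symmetric] g(2) h(3) h(4)[symmetric]] by blast
  then show ?thesis by (rule facI)
qed

lemma pb_fac_conv: assumes P: "is_pullback C f m n q" and F: "fac C g n"
  shows "fac C (cmp C f g) m"
proof -
  note X = pbF[OF P]
  obtain h where h: "h \<in> Ar C" "dm C h = dm C g" "cd C h = dm C n" "cmp C n h = g"
    using F by (rule facE)
  have "cmp C f g = cmp C f (cmp C n h)" using h(4) by simp
  also have "\<dots> = cmp C (cmp C f n) h" using assoc[OF h(1) X(3) X(1) h(3) X(7)] by simp
  also have "\<dots> = cmp C (cmp C m q) h" using X(9) by simp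
  also have "\<dots> = cmp C m (cmp C q h)" using assoc[OF h(1) X(4) X(2) _ X(8)] h(3) X(6) by simp
  finally have e: "cmp C m (cmp C q h) = cmp C f g" by simp
  have c1: "cmp C n h \<in> Ar C" "dm C (cmp C n h) = dm C h" "cd C (cmp C n h) = cd C n" using comp_ar[OF h(1) X(3) h(3)] by auto
  have c2: "dm C (cmp C f g) = dm C g" using comp_ar[OF c1(1) X(1)] h(4) c1 X by auto
  show ?thesis
    by (rule facI[OF _ _ _ e]) (use comp_ar[of h q] h X c2 in auto)
qed

lemma fac_trans: assumes "fac C g m" "fac C m n" "n \<in> Ar C" shows "fac C g n"
proof -
  obtain h where h: "h \<in> Ar C" "dm C h = dm C g" "cd C h = dm C m" "cmp C m h = g"
    using assms(1) by (rule facE)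
  obtain h' where h': "h' \<in> Ar C" "dm C h' = dm C m" "cd C h' = dm C n" "cmp C n h' = m"
    using assms(2) by (rule facE)
  have "cmp C n (cmp C h' h) = g" using assoc[OF h(1) h'(1) assms(3)] h h' by simp
  then show ?thesis by (rule facI[rotated 3]) (use h h' comp_ar[of h h'] in auto)
qed

lemma fac_comp: assumes "fac C g m" "h \<in> Ar C" "cd C h = dm C g" "m \<in> Ar C"
  shows "fac C (cmp C g h) m"
proof -
  obtain k where k: "k \<in> Ar C" "dm C k = dm C g" "cd C k = dm C m" "cmp C m k = g"
    using assms(1) by (rule facE)
  have e: "cmp C m (cmp C k h) = cmp C g h" using assoc[OF assms(2) k(1) assms(4)] k assms(3) by simp
  have "dm C (cmp C g h) = dm C h" using comp_ar[OF assms(2) _ assms(3)] comp_ar[OF k(1) assms(4) k(3)] k(4) by auto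
  then show ?thesis by (intro facI[OF _ _ _ e]) (use comp_ar[of h k] k assms in auto)
qed

lemma fac_triv: "m \<in> Ar C \<Longrightarrow> h \<in> Ar C \<Longrightarrow> cd C h = dm C m \<Longrightarrow> fac C (cmp C m h) m"
  by (rule facI[of h]) (use comp_ar in auto)

lemma fac_post: assumes "fac C g m" "f \<in> Ar C" "cd C m = dm C f" "m \<in> Ar C"
  shows "fac C (cmp C f g) (cmp C f m)"
proof -
  obtain k where k: "k \<in> Ar C" "dm C k = dm C g" "cd C k = dm C m" "cmp C m k = g"
    using assms(1) by (rule facE)
  have e: "cmp C (cmp C f m) k = cmp C f g" using assoc[OF k(1) assms(4) assms(2) k(3) assms(3)] k by simp
  have "dm C (cmp C f g) = dm C k" using comp_ar[OF k(1) assms(4) k(3)] comp_ar[of g f] k(4) assms by auto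
  then show ?thesis by (intro facI[OF _ _ _ e]) (use comp_ar[of m f] k assms in auto)
qed

lemma pb_meet: assumes P: "is_pullback C m n p q" and "fac C g m" "fac C g n"
  shows "fac C g (cmp C m p)"
proof -
  note X = pbF[OF P]
  obtain h1 where h1: "h1 \<in> Ar C" "dm C h1 = dm C g" "cd C h1 = dm C m" "cmp C m h1 = g"
    using assms(2) by (rule facE)
  obtain h2 where h2: "h2 \<in> Ar C" "dm C h2 = dm C g" "cd C h2 = dm C n" "cmp C n h2 = g"
    using assms(3) by (rule facE)
  obtain k where k: "k \<in> Ar C" "dm C k = dm C h1" "cd C k = dm C p" "cmp C p k = h1"
    using pb_univ[OF P h1(1) h2(1)] h1 h2 by auto
  have "cmp C (cmp C m p) k = g" using assoc[OF k(1) X(3) X(1) k(3) X(7)] k h1 by simp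
  then show ?thesis by (rule facI[rotated 3]) (use k h1 X comp_ar[of p m] in auto)
qed

lemma mono_pb: assumes P: "is_pullback C f m n q" and M: "mono C m" shows "mono C n"
  unfolding mono_def
proof (intro conjI allI impI)
  note X = pbF[OF P]
  show "n \<in> Ar C" by (rule X(3))
  fix g h assume A: "g \<in> Ar C \<and> h \<in> Ar C \<and> dm C g = dm C h \<and> cd C g = dm C n \<and> cd C h = dm C n \<and> cmp C n g = cmp C n h"
  have g: "g \<in> Ar C" "cd C g = dm C n" and h: "h \<in> Ar C" "cd C h = dm C n" using A by auto
  have e: "\<And>x. x \<in> Ar C \<Longrightarrow> cd C x = dm C n \<Longrightarrow> cmp C m (cmp C q x) = cmp C f (cmp C n x)"
  proof -
    fix x assume x: "x \<in> Ar C" "cd C x = dm C n"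
    have "cmp C m (cmp C q x) = cmp C (cmp C m q) x" using assoc[OF x(1) X(4) X(2) _ X(8)] x X(6) by simp
    also have "\<dots> = cmp C (cmp C f n) x" using X(9) by simp
    also have "\<dots> = cmp C f (cmp C n x)" using assoc[OF x(1) X(3) X(1) x(2) X(7)] by simp
    finally show "cmp C m (cmp C q x) = cmp C f (cmp C n x)" .
  qed
  have "cmp C m (cmp C q g) = cmp C m (cmp C q h)" using e[OF g] e[OF h] A by simp
  then have qq: "cmp C q g = cmp C q h" using M A X comp_ar[of g q] comp_ar[of h q]
    unfolding mono_def by auto
  have ng: "cmp C n g \<in> Ar C" "dm C (cmp C n g) = dm C g" "cd C (cmp C n g) = cd C n"
    using A X comp_ar[of g n] by auto
  have qg: "cmp C q g \<in> Ar C" "dm C (cmp C q g) = dm C g" "cd C (cmp C q g) = cd C q"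
    using A X comp_ar[of g q] by auto
  show "g = h"
    by (rule pb_uniq[OF P ng(1) qg(1) _ _ _ e[OF g, symmetric]])
       (use ng qg X A qq in \<open>auto simp: hom_iff\<close>)
qed

lemma prod_uniq: assumes P: "is_product C X Y Pr p1 p2" and "h1 \<in> Ar C" "h2 \<in> Ar C"
  "dm C h1 = dm C h2" "cd C h1 = Pr" "cd C h2 = Pr"
  "cmp C p1 h1 = cmp C p1 h2" "cmp C p2 h1 = cmp C p2 h2" shows "h1 = h2"
proof -
  have p: "p1 \<in> hom C Pr X" "p2 \<in> hom C Pr Y" using P unfolding is_product_def by auto
  have "cmp C p1 h1 \<in> hom C (dm C h1) X" "cmp C p2 h1 \<in> hom C (dm C h1) Y"
    using p assms comp_ar[of h1 p1] comp_ar[of h1 p2] by (auto simp: hom_iff)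
  then have "\<exists>!h. h \<in> hom C (dm C h1) Pr \<and> cmp C p1 h = cmp C p1 h1 \<and> cmp C p2 h = cmp C p2 h1"
    using P unfolding is_product_def by blast
  then show ?thesis using assms by (auto simp: hom_iff)
qed

lemma term_uniq: "terminal C T \<Longrightarrow> f \<in> hom C X T \<Longrightarrow> g \<in> hom C X T \<Longrightarrow> f = g"
  unfolding terminal_def using ar_ob by (metis hom_iff)

end

lemma prodF: assumes "is_product C X Y P p1 p2"
  shows "P \<in> Ob C" "p1 \<in> Ar C" "dm C p1 = P" "cd C p1 = X" "p2 \<in> Ar C" "dm C p2 = P" "cd C p2 = Y"
proof -
  have "P \<in> Ob C \<and> p1 \<in> hom C P X \<and> p2 \<in> hom C P Y" using assms unfolding is_product_def by (elim conjE) (intro conjI)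
  then show "P \<in> Ob C" "p1 \<in> Ar C" "dm C p1 = P" "cd C p1 = X" "p2 \<in> Ar C" "dm C p2 = P" "cd C p2 = Y"
    unfolding hom_iff by auto
qed

lemma prodE: assumes P: "is_product C X Y P p1 p2" and "f \<in> Ar C" "g \<in> Ar C" "dm C f = dm C g"
  "cd C f = X" "cd C g = Y"
  shows "\<exists>h. h \<in> Ar C \<and> dm C h = dm C f \<and> cd C h = P \<and> cmp C p1 h = f \<and> cmp C p2 h = g"
proof -
  have "f \<in> hom C (dm C f) X" "g \<in> hom C (dm C f) Y" using assms unfolding hom_iff by auto
  then have "\<exists>!h. h \<in> hom C (dm C f) P \<and> cmp C p1 h = f \<and> cmp C p2 h = g"
    using P unfolding is_product_def by blast
  then show ?thesis unfolding hom_iff by blast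
qed

theorem lemma7:
  fixes C :: "('o, 'a) cat" and \<tau> :: "'o \<Rightarrow> 'a \<Rightarrow> 'a"
    and T A B PAB PBA :: 'o and a1 b1 b2 a2 Ra Rb :: 'a
  assumes reg: "regular_category C"
    and termT: "terminal C T"
    and obA: "A \<in> Ob C" and obB: "B \<in> Ob C"
    and prodAB: "is_product C A B PAB a1 b1"
    and prodBA: "is_product C B A PBA b2 a2"
    and Ra: "Ra \<in> Sub C PAB" and Rb: "Rb \<in> Sub C PBA"
    and hyp: "\<forall>p \<in> Sub C A. \<exists>c \<in> hom C T A.
       (\<forall>bang t1 t2. bang \<in> hom C PAB T \<and> is_pair C a1 b1 (cmp C c bang) b1 t1
                         \<and> is_pair C b2 a2 b1 a1 t2 \<longrightarrow>
          (\<forall>ra rb pp. pb C t1 Ra ra \<and> pb C t2 Rb rb \<and> pb C a1 p pp \<longrightarrow>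
             (\<forall>m1. sub_meet C ra rb m1 \<longrightarrow> sub_le C m1 pp) \<and>
             (\<forall>m2. sub_meet C ra pp m2 \<longrightarrow> sub_le C m2 rb))) \<and>
       (\<forall>bangB u s m. bangB \<in> hom C B T \<and> is_pair C a1 b1 (cmp C c bangB) (idt C B) u
                        \<and> pb C u Ra s \<and> is_image C (cmp C bangB s) m \<longrightarrow>
          sub_le C (idt C T) m)"
    and natt: "nat_trans_Sub C \<tau>"
  shows "\<exists>s \<in> Sub C T. sub_eq C (\<tau> T s) s"
proof -
  have catC: "category C" and PB: "\<And>f g. f \<in> Ar C \<Longrightarrow> g \<in> Ar C \<Longrightarrow> cd C f = cd C g \<Longrightarrow> \<exists>p q. is_pullback C f g p q"
    and IM: "\<And>f. f \<in> Ar C \<Longrightarrow> \<exists>m. is_image C f m"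
    and ST: "\<And>f m g f' g0 m' g1. is_image C f m \<Longrightarrow> is_pullback C g f f' g0 \<Longrightarrow> is_pullback C g m m' g1
          \<Longrightarrow> is_image C f' m'"
    using reg unfolding regular_category_def by blast+
  interpret rcat C by unfold_locales (rule catC)
  have ImF: "\<And>f m. is_image C f m \<Longrightarrow> mono C m \<and> cd C m = cd C f \<and> fac C f m"
    unfolding is_image_def fac_def Bex_def hom_iff by blast
  have ImL: "fac C m n" if as: "is_image C f m" "mono C n" "cd C n = cd C f" "fac C f n" for f m n
  proof -
    obtain h where h: "h \<in> Ar C" "dm C h = dm C f" "cd C h = dm C n" "cmp C n h = f"
      using as(4) by (rule facE)
    have "\<exists>e \<in> hom C (dm C f) (dm C n). f = cmp C n e" using h hom_iff by metis
    then have "sub_le C m n" using as(1-3) unfolding is_image_def by blast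
    then show ?thesis by (simp add: sub_le_fac)
  qed
  have monoAr: "\<And>m. mono C m \<Longrightarrow> m \<in> Ar C" unfolding mono_def by auto
  have TOb: "T \<in> Ob C" using termT unfolding terminal_def by auto
  have bangE: "\<And>X. X \<in> Ob C \<Longrightarrow> \<exists>f. f \<in> Ar C \<and> dm C f = X \<and> cd C f = T"
    using termT unfolding terminal_def hom_iff by blast
  note pAB = prodF[OF prodAB]
  note pBA = prodF[OF prodBA]
  have RaF0: "mono C Ra" "cd C Ra = PAB" using Ra unfolding Sub_def by simp_all
  have RaF: "mono C Ra" "Ra \<in> Ar C" "cd C Ra = PAB" using RaF0 monoAr by simp_all
  have RbF0: "mono C Rb" "cd C Rb = PBA" using Rb unfolding Sub_def by simp_all
  have RbF: "mono C Rb" "Rb \<in> Ar C" "cd C Rb = PBA" using RbF0 monoAr by simp_all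
  note cA = comp_ar
  obtain t2 where t2: "t2 \<in> Ar C" "dm C t2 = PAB" "cd C t2 = PBA" "cmp C b2 t2 = b1" "cmp C a2 t2 = a1"
    using prodE[OF prodBA pAB(5) pAB(2)] pAB by auto
  have pair2: "is_pair C b2 a2 b1 a1 t2" unfolding is_pair_def using t2 pAB pBA by auto
  obtain rb rq where Prb: "is_pullback C t2 Rb rb rq" using PB[OF t2(1) RbF(2)] t2 RbF by auto
  note Xrb = pbF[OF Prb]
  obtain kp kq where PK: "is_pullback C Ra rb kp kq" using PB[OF RaF(2) Xrb(3)] RaF Xrb t2 by auto
  note XK = pbF[OF PK]
  define k where "k = cmp C Ra kp"
  have kF: "k \<in> Ar C" "dm C k = dm C kp" "cd C k = PAB" using cA[OF XK(3) RaF(2) XK(7)] RaF unfolding k_def by auto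
  have akF: "cmp C a1 k \<in> Ar C" "dm C (cmp C a1 k) = dm C kp" "cd C (cmp C a1 k) = A"
    using cA[OF kF(1) pAB(2)] kF pAB by auto
  obtain \<delta> where Idl: "is_image C (cmp C a1 k) \<delta>" using IM[OF akF(1)] by auto
  have dF: "mono C \<delta>" "cd C \<delta> = A" "fac C (cmp C a1 k) \<delta>" "\<delta> \<in> Ar C" using ImF[OF Idl] akF monoAr by auto
  have dSub: "\<delta> \<in> Sub C A" unfolding Sub_def using dF by auto
  define p where "p = \<tau> A \<delta>"
  have pSub: "p \<in> Sub C A" using natt dSub obA unfolding nat_trans_Sub_def p_def by blast
  have pF: "mono C p" "cd C p = A" "p \<in> Ar C" using pSub monoAr unfolding Sub_def by auto
  obtain c where cH: "c \<in> hom C T A" and H1: "\<forall>bang t1 t2. bang \<in> hom C PAB T \<and> is_pair C a1 b1 (cmp C c bang) b1 t1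
                         \<and> is_pair C b2 a2 b1 a1 t2 \<longrightarrow>
          (\<forall>ra rb pp. pb C t1 Ra ra \<and> pb C t2 Rb rb \<and> pb C a1 p pp \<longrightarrow>
             (\<forall>m1. sub_meet C ra rb m1 \<longrightarrow> sub_le C m1 pp) \<and>
             (\<forall>m2. sub_meet C ra pp m2 \<longrightarrow> sub_le C m2 rb))"
     and H2: "\<forall>bangB u s m. bangB \<in> hom C B T \<and> is_pair C a1 b1 (cmp C c bangB) (idt C B) u
                        \<and> pb C u Ra s \<and> is_image C (cmp C bangB s) m \<longrightarrow>
          sub_le C (idt C T) m"
    using hyp pSub by blast
  have cF: "c \<in> Ar C" "dm C c = T" "cd C c = A" using cH unfolding hom_iff by auto
  obtain bang where bang: "bang \<in> Ar C" "dm C bang = PAB" "cd C bang = T" using bangE[OF pAB(1)] by auto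
  have cb: "cmp C c bang \<in> Ar C" "dm C (cmp C c bang) = PAB" "cd C (cmp C c bang) = A"
    using cA[OF bang(1) cF(1)] bang cF by auto
  obtain t1 where t1: "t1 \<in> Ar C" "dm C t1 = PAB" "cd C t1 = PAB" "cmp C a1 t1 = cmp C c bang" "cmp C b1 t1 = b1"
    using prodE[OF prodAB cb(1) pAB(5)] cb pAB by auto
  have pair1: "is_pair C a1 b1 (cmp C c bang) b1 t1" unfolding is_pair_def using t1 cb pAB by auto
  obtain ra rq1 where Pra: "is_pullback C t1 Ra ra rq1" using PB[OF t1(1) RaF(2)] t1 RaF by auto
  note Xra = pbF[OF Pra]
  obtain pp pq where Ppp: "is_pullback C a1 p pp pq" using PB[OF pAB(2) pF(3)] pAB pF by auto
  note Xpp = pbF[OF Ppp]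
  have HH: "(\<forall>m1. sub_meet C ra rb m1 \<longrightarrow> sub_le C m1 pp) \<and> (\<forall>m2. sub_meet C ra pp m2 \<longrightarrow> sub_le C m2 rb)"
    using H1 bang pair1 pair2 Pra Prb Ppp unfolding pb_def hom_iff by blast
  obtain mp1 mq1 where Pm1: "is_pullback C ra rb mp1 mq1" using PB[OF Xra(3) Xrb(3)] Xra Xrb t1 t2 by auto
  obtain mp2 mq2 where Pm2: "is_pullback C ra pp mp2 mq2" using PB[OF Xra(3) Xpp(3)] Xra Xpp t1 pAB by auto
  have A1: "fac C (cmp C ra mp1) pp" using HH Pm1 unfolding sub_meet_def sub_le_fac by blast
  have A2: "fac C (cmp C ra mp2) rb" using HH Pm2 unfolding sub_meet_def sub_le_fac by blast
  have m1Ar: "cmp C ra mp1 \<in> Ar C" using pbF[OF Pm1] cA by blast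
  have m2Ar: "cmp C ra mp2 \<in> Ar C" using pbF[OF Pm2] cA by blast
  obtain s sq where Ps: "is_pullback C c \<delta> s sq" using PB[OF cF(1) dF(4)] cF dF by auto
  note Xs = pbF[OF Ps]
  have sF: "mono C s" "cd C s = T" using mono_pb[OF Ps dF(1)] Xs cF by auto
  have sSub: "s \<in> Sub C T" unfolding Sub_def using sF by auto
  obtain n' nq where Pn: "is_pullback C c p n' nq" using PB[OF cF(1) pF(3)] cF pF by auto
  note Xn = pbF[OF Pn]
  have nF: "mono C n'" "cd C n' = T" using mono_pb[OF Pn pF(1)] Xn cF by auto
  have nat1: "sub_eq C (\<tau> T s) n'"
    using natt cH dSub Ps Pn unfolding nat_trans_Sub_def pb_def p_def by blast
  have D1: "fac C s n'"
  proof -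
    obtain f' g0 where Pf: "is_pullback C c (cmp C a1 k) f' g0" using PB[OF cF(1) akF(1)] cF akF by auto
    note Xf = pbF[OF Pf]
    have If: "is_image C f' s" by (rule ST[OF Idl Pf Ps])
    define g where "g = cmp C k g0"
    have gF: "g \<in> Ar C" "dm C g = dm C g0" "cd C g = PAB" using cA[OF Xf(4) kF(1)] Xf kF akF unfolding g_def by auto
    have g0k: "cd C g0 = dm C k" using Xf(8) akF kF by simp
    have fg_Ra: "fac C g Ra"
    proof -
      have "g = cmp C Ra (cmp C kp g0)" unfolding g_def k_def
        using assoc[OF Xf(4) XK(3) RaF(2) _ XK(7)] g0k kF by simp
      then show ?thesis using fac_triv[OF RaF(2)] cA[OF Xf(4) XK(3)] g0k kF XK by auto
    qed
    have fg_rb: "fac C g rb"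
    proof -
      have "g = cmp C rb (cmp C kq g0)" unfolding g_def k_def
        using assoc[OF Xf(4) XK(4) XK(2) _ XK(8)] g0k kF XK(6) XK(9) by simp
      then show ?thesis using fac_triv[OF XK(2)] cA[OF Xf(4) XK(4)] g0k kF XK by auto
    qed
    have ag: "cmp C a1 g = cmp C c f'"
      using assoc[OF Xf(4) kF(1) pAB(2) g0k] kF pAB Xf(9) unfolding g_def by simp
    have bg: "cmp C bang g = f'"
      using term_uniq[OF termT, of "cmp C bang g" "dm C g0" f'] cA[OF gF(1) bang(1)] gF bang Xf cF
      by (auto simp: hom_iff)
    have tg: "cmp C t1 g = g"
    proof (rule prod_uniq[OF prodAB])
      show "cmp C t1 g \<in> Ar C" "dm C (cmp C t1 g) = dm C g" "cd C (cmp C t1 g) = PAB"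
        using cA[OF gF(1) t1(1)] gF t1 by auto
      show "g \<in> Ar C" "cd C g = PAB" by (rule gF(1), rule gF(3))
      have "cmp C a1 (cmp C t1 g) = cmp C (cmp C c bang) g"
        using assoc[OF gF(1) t1(1) pAB(2)] gF t1 pAB by simp
      also have "\<dots> = cmp C c (cmp C bang g)" using assoc[OF gF(1) bang(1) cF(1)] gF bang cF by simp
      finally show "cmp C a1 (cmp C t1 g) = cmp C a1 g" using bg ag by simp
      show "cmp C b1 (cmp C t1 g) = cmp C b1 g"
        using assoc[OF gF(1) t1(1) pAB(5)] gF t1 pAB by simp
    qed
    have fg_ra: "fac C g ra"
      by (rule pb_fac[OF Pra gF(1)]) (use gF t1 tg fg_Ra in auto)
    have "fac C g (cmp C ra mp1)" by (rule pb_meet[OF Pm1 fg_ra fg_rb])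
    then have "fac C g pp" using fac_trans[OF _ A1 Xpp(3)] by blast
    then have "fac C (cmp C a1 g) p" by (rule pb_fac_conv[OF Ppp])
    then have "fac C (cmp C c f') p" using ag by simp
    then have "fac C f' n'" by (rule pb_fac[OF Pn Xf(3) Xf(7)])
    moreover have "cd C n' = cd C f'" using nF Xf cF by simp
    ultimately show ?thesis using ImL[OF If nF(1)] by blast
  qed
  have D2: "fac C n' s"
  proof -
    obtain bangB where bB: "bangB \<in> Ar C" "dm C bangB = B" "cd C bangB = T" using bangE[OF obB] by auto
    have cbB: "cmp C c bangB \<in> Ar C" "dm C (cmp C c bangB) = B" "cd C (cmp C c bangB) = A"
      using cA[OF bB(1) cF(1)] bB cF by auto
    have idB: "idt C B \<in> Ar C" "dm C (idt C B) = B" "cd C (idt C B) = B" using id_ar[OF obB] by auto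
    obtain u where u: "u \<in> Ar C" "dm C u = B" "cd C u = PAB" "cmp C a1 u = cmp C c bangB" "cmp C b1 u = idt C B"
      using prodE[OF prodAB cbB(1) idB(1)] cbB idB by auto
    have pairu: "is_pair C a1 b1 (cmp C c bangB) (idt C B) u" unfolding is_pair_def using u cbB pAB by auto
    obtain s0 q0 where P0: "is_pullback C u Ra s0 q0" using PB[OF u(1) RaF(2)] u RaF by auto
    note X0 = pbF[OF P0]
    define f0 where "f0 = cmp C bangB s0"
    have f0F: "f0 \<in> Ar C" "dm C f0 = dm C s0" "cd C f0 = T" using cA[OF X0(3) bB(1)] X0 u bB unfolding f0_def by auto
    obtain m where Im: "is_image C f0 m" using IM[OF f0F(1)] by auto
    have topm: "sub_le C (idt C T) m" using H2 bB pairu P0 Im unfolding pb_def hom_iff f0_def by blast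
    have mF: "mono C m" "cd C m = T" "m \<in> Ar C" using ImF[OF Im] f0F monoAr by auto
    have nAr: "n' \<in> Ar C" using Xn by simp
    obtain f2 g2 where P2: "is_pullback C n' f0 f2 g2" using PB[OF nAr f0F(1)] nF f0F by auto
    note X2 = pbF[OF P2]
    obtain m' g3 where P3: "is_pullback C n' m m' g3" using PB[OF nAr mF(3)] nF mF by auto
    obtain w wq where Pw: "is_pullback C n' s w wq" using PB[OF nAr Xs(3)] nF sF by auto
    note Xw = pbF[OF Pw]
    have If2: "is_image C f2 m'" by (rule ST[OF Im P2 P3])
    have wF: "mono C w" "cd C w = dm C n'" using mono_pb[OF Pw sF(1)] Xw by auto
    have g2s0: "cd C g2 = dm C s0" using X2(8) f0F by simp
    define y where "y = cmp C s0 g2"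
    have yF: "y \<in> Ar C" "dm C y = dm C g2" "cd C y = B" using cA[OF X2(4) X0(3) g2s0] X0 u unfolding y_def by auto
    define e where "e = cmp C u y"
    have eF: "e \<in> Ar C" "dm C e = dm C g2" "cd C e = PAB" using cA[OF yF(1) u(1)] yF u unfolding e_def by auto
    have eq1: "cmp C n' f2 = cmp C bangB y"
      using X2(9) assoc[OF X2(4) X0(3) bB(1) g2s0] X0 u bB unfolding f0_def y_def by simp
    have nf2: "cmp C n' f2 \<in> Ar C" "cd C (cmp C n' f2) = T" using cA[OF X2(3) nAr X2(7)] nF by auto
    have aey: "cmp C a1 e = cmp C c (cmp C bangB y)"
    proof -
      have "cmp C a1 e = cmp C (cmp C a1 u) y" using assoc[OF yF(1) u(1) pAB(2)] yF u pAB unfolding e_def by simp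
      also have "\<dots> = cmp C (cmp C c bangB) y" using u by simp
      also have "\<dots> = cmp C c (cmp C bangB y)" using assoc[OF yF(1) bB(1) cF(1)] yF bB cF by simp
      finally show ?thesis .
    qed
    have eq2: "cmp C a1 e = cmp C c (cmp C n' f2)" using aey eq1 by simp
    have fe_Ra: "fac C e Ra"
    proof -
      have "e = cmp C (cmp C u s0) g2" using assoc[OF X2(4) X0(3) u(1) g2s0] X0 unfolding e_def y_def by simp
      also have "\<dots> = cmp C (cmp C Ra q0) g2" using X0(9) by simp
      also have "\<dots> = cmp C Ra (cmp C q0 g2)" using assoc[OF X2(4) X0(4) RaF(2)] g2s0 X0 by simp
      finally show ?thesis using fac_triv[OF RaF(2)] cA[OF X2(4) X0(4)] g2s0 X0 by auto
    qed
    have fe_pp: "fac C e pp"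
    proof (rule pb_fac[OF Ppp eF(1)])
      show "cd C e = dm C a1" using eF pAB by simp
      have "cmp C a1 e = cmp C (cmp C c n') f2" using eq2 assoc[OF X2(3) nAr cF(1) X2(7)] Xn by simp
      also have "\<dots> = cmp C (cmp C p nq) f2" using Xn(9) by simp
      also have "\<dots> = cmp C p (cmp C nq f2)" using assoc[OF X2(3) Xn(4) pF(3)] X2 Xn by simp
      finally show "fac C (cmp C a1 e) p" using fac_triv[OF pF(3)] cA[OF X2(3) Xn(4)] X2 Xn by auto
    qed
    have be: "cmp C bang e = cmp C bangB y"
      using term_uniq[OF termT, of "cmp C bang e" "dm C g2" "cmp C bangB y"] cA[OF eF(1) bang(1)] cA[OF yF(1) bB(1)] eF yF bang bB
      by (auto simp: hom_iff)
    have te: "cmp C t1 e = e"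
    proof (rule prod_uniq[OF prodAB])
      show "cmp C t1 e \<in> Ar C" "dm C (cmp C t1 e) = dm C e" "cd C (cmp C t1 e) = PAB"
        using cA[OF eF(1) t1(1)] eF t1 by auto
      show "e \<in> Ar C" "cd C e = PAB" by (rule eF(1), rule eF(3))
      have "cmp C a1 (cmp C t1 e) = cmp C (cmp C c bang) e"
        using assoc[OF eF(1) t1(1) pAB(2)] eF t1 pAB by simp
      also have "\<dots> = cmp C c (cmp C bang e)" using assoc[OF eF(1) bang(1) cF(1)] eF bang cF by simp
      finally show "cmp C a1 (cmp C t1 e) = cmp C a1 e" using be aey by simp
      show "cmp C b1 (cmp C t1 e) = cmp C b1 e"
        using assoc[OF eF(1) t1(1) pAB(5)] eF t1 pAB by simp
    qed
    have fe_ra: "fac C e ra"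
      by (rule pb_fac[OF Pra eF(1)]) (use eF t1 te fe_Ra in auto)
    have "fac C e (cmp C ra mp2)" by (rule pb_meet[OF Pm2 fe_ra fe_pp])
    then have fe_rb: "fac C e rb" using fac_trans[OF _ A2 Xrb(3)] by blast
    have fe_k: "fac C e k" unfolding k_def by (rule pb_meet[OF PK fe_Ra fe_rb])
    have "fac C (cmp C a1 e) (cmp C a1 k)" by (rule fac_post[OF fe_k pAB(2)]) (use kF pAB in auto)
    then have "fac C (cmp C a1 e) \<delta>" using fac_trans[OF _ dF(3) dF(4)] by blast
    then have Fd: "fac C (cmp C c (cmp C n' f2)) \<delta>" using eq2 by simp
    have "fac C (cmp C n' f2) s" using pb_fac[OF Ps nf2(1) _ Fd] nf2 cF by simp
    then have ff: "fac C f2 w" by (rule pb_fac[OF Pw X2(3) X2(7)])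
    have mw: "fac C m' w" using ImL[OF If2 wF(1) _ ff] wF X2 by simp
    have dnOb: "dm C n' \<in> Ob C" using ar_ob[OF nAr] by simp
    note idn = id_ar[OF dnOb]
    have topf: "fac C (idt C T) m" using topm unfolding sub_le_fac .
    have "fac C (cmp C (idt C T) n') m" by (rule fac_comp[OF topf nAr]) (use id_ar[OF TOb] nF mF in auto)
    then have "fac C n' m" using idl[OF nAr] nF by simp
    then have Fm: "fac C (cmp C n' (idt C (dm C n'))) m" using idr[OF nAr] by simp
    have "fac C (idt C (dm C n')) m'" using pb_fac[OF P3 idn[THEN conjunct1] _ Fm] idn by simp
    then have "fac C (idt C (dm C n')) w" using fac_trans[OF _ mw] Xw(3) by blast
    then have "fac C (cmp C n' (idt C (dm C n'))) s" by (rule pb_fac_conv[OF Pw])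
    then show ?thesis using idr[OF nAr] by simp
  qed
  have tauSub: "\<tau> T s \<in> Sub C T" using natt sSub TOb unfolding nat_trans_Sub_def by blast
  have tAr: "\<tau> T s \<in> Ar C" using tauSub monoAr unfolding Sub_def by auto
  have nAr: "n' \<in> Ar C" using Xn by simp
  have "fac C (\<tau> T s) n'" "fac C n' (\<tau> T s)" using nat1 unfolding sub_eq_def sub_le_fac by auto
  then have "sub_eq C (\<tau> T s) s" unfolding sub_eq_def sub_le_fac
    using fac_trans[of "\<tau> T s" n' s] fac_trans[of s n' "\<tau> T s"] D1 D2 Xs(3) tAr by blast
  then show ?thesis using sSub by blast
qed


end
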